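(* Let $-\infty<a<b<\infty$, let $y:[a,b]\to\mathbb{R}$ be $L$-Lipschitz, and let $\gamma(t)=t+iy(t)$. Suppose $z_i\in\mathbb{C}$ and $\beta_i>0$ for $i=1,\dots,m$, with $\sum_{i=1}^m\beta_i=\beta<1$. Then $$\int_a^b\prod_{i=1}^m\left(\frac{1}{|\gamma(t)-z_i|}\right)^{\beta_i}|\gamma'(t)|\,dt<\mathrm{Const}_{L,a,b,\beta},$$ where $\mathrm{Const}_{L,a,b,\beta}$ is a constant depending only on $L,a,b,\beta$.
   Context: $|\gamma'(t)|=\sqrt{1+y'(t)^2}$, defined for almost every $t$. A function $y$ is $L$-Lipschitz if $|y(t_1)-y(t_2)|\le L|t_1-t_2|$ for all $t_1,t_2$. *)

theory Defs
  imports "HOL-Analysis.Analysis"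
begin

end

theory Submission
  imports Defs
begin

lemma deriv_nodiff:
  assumes "\<not> (\<exists>D. DERIV g t :> D)"
  shows "deriv g t = (SOME D::real. False)"
proof -
  have "(\<lambda>D. DERIV g t :> D) = (\<lambda>D. False)" using assms by auto
  then show ?thesis unfolding deriv_def by simp
qed

lemma cauchy_set_closed:
  fixes g :: "real \<Rightarrow> real"
  assumes "continuous_on UNIV g"
  shows "closed {t. \<forall>h k. 0 < \<bar>h\<bar> \<and> \<bar>h\<bar> < d \<and> 0 < \<bar>k\<bar> \<and> \<bar>k\<bar> < d \<longrightarrow>
     \<bar>(g (t+h) - g t)/h - (g (t+k) - g t)/k\<bar> \<le> e}"
proof -
  have eq: "{t. \<forall>h k. 0 < \<bar>h\<bar> \<and> \<bar>h\<bar> < d \<and> 0 < \<bar>k\<bar> \<and> \<bar>k\<bar> < d \<longrightarrow>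
     \<bar>(g (t+h) - g t)/h - (g (t+k) - g t)/k\<bar> \<le> e}
    = (\<Inter>p\<in>{p. 0 < \<bar>fst p\<bar> \<and> \<bar>fst p\<bar> < d \<and> 0 < \<bar>snd p\<bar> \<and> \<bar>snd p\<bar> < d}.
        {t. \<bar>(g (t+fst p) - g t)/fst p - (g (t+snd p) - g t)/snd p\<bar> \<le> e})"
    by auto
  have c: "continuous_on UNIV (\<lambda>t. g (t + c))" for c
    by (rule continuous_on_compose2[OF assms]) (auto intro!: continuous_intros)
  show ?thesis unfolding eq
    apply (rule closed_INT)
    apply (intro ballI closed_Collect_le continuous_intros c assms)
    apply auto
    done
qed

lemma diff_iff_cauchy:
  fixes g :: "real \<Rightarrow> real"
  defines "Q \<equiv> \<lambda>t h. (g (t+h) - g t)/h"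
  shows "(\<exists>D. DERIV g t :> D) \<longleftrightarrow> (\<forall>n::nat. \<exists>m::nat. \<forall>h k. 0 < \<bar>h\<bar> \<and> \<bar>h\<bar> < 1/Suc m \<and> 0 < \<bar>k\<bar> \<and> \<bar>k\<bar> < 1/Suc m \<longrightarrow>
     \<bar>Q t h - Q t k\<bar> \<le> 1/Suc n)"
proof
  assume "\<exists>D. DERIV g t :> D"
  then obtain D where D: "(Q t \<longlongrightarrow> D) (at 0)" unfolding DERIV_def Q_def by blast
  show "\<forall>n::nat. \<exists>m::nat. \<forall>h k. 0 < \<bar>h\<bar> \<and> \<bar>h\<bar> < 1/Suc m \<and> 0 < \<bar>k\<bar> \<and> \<bar>k\<bar> < 1/Suc m \<longrightarrow>
     \<bar>Q t h - Q t k\<bar> \<le> 1/Suc n"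
  proof
    fix n :: nat
    have "(0::real) < 1/(2*Suc n)" by simp
    with D have "\<forall>\<^sub>F h in at 0. dist (Q t h) D < 1/(2*Suc n)" by (rule tendstoD)
    then obtain d where d: "d > 0" and dd: "\<And>h. h \<noteq> 0 \<Longrightarrow> dist h 0 < d \<Longrightarrow> dist (Q t h) D < 1/(2*Suc n)"
      unfolding eventually_at by blast
    obtain m :: nat where m: "1/Suc m < d"
      by (metis d nat_approx_posE)
    show "\<exists>m::nat. \<forall>h k. 0 < \<bar>h\<bar> \<and> \<bar>h\<bar> < 1/Suc m \<and> 0 < \<bar>k\<bar> \<and> \<bar>k\<bar> < 1/Suc m \<longrightarrow>
     \<bar>Q t h - Q t k\<bar> \<le> 1/Suc n"
    proof (intro exI allI impI)
      fix h k :: real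
      assume hk: "0 < \<bar>h\<bar> \<and> \<bar>h\<bar> < 1/Suc m \<and> 0 < \<bar>k\<bar> \<and> \<bar>k\<bar> < 1/Suc m"
      have 1: "\<bar>Q t h - D\<bar> < 1/(2*Suc n)" using dd[of h] hk m by (auto simp: dist_real_def)
      have 2: "\<bar>Q t k - D\<bar> < 1/(2*Suc n)" using dd[of k] hk m by (auto simp: dist_real_def)
      have "\<bar>Q t h - Q t k\<bar> \<le> \<bar>Q t h - D\<bar> + \<bar>Q t k - D\<bar>" by linarith
      also have "\<dots> \<le> 1/(2*Suc n) + 1/(2*Suc n)" using 1 2 by linarith
      also have "\<dots> = 1/Suc n" by (simp add: field_simps)
      finally show "\<bar>Q t h - Q t k\<bar> \<le> 1/Suc n" .
    qed
  qed
next
  assume H: "\<forall>n::nat. \<exists>m::nat. \<forall>h k. 0 < \<bar>h\<bar> \<and> \<bar>h\<bar> < 1/Suc m \<and> 0 < \<bar>k\<bar> \<and> \<bar>k\<bar> < 1/Suc m \<longrightarrow>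
     \<bar>Q t h - Q t k\<bar> \<le> 1/Suc n"
  define s where "s = (\<lambda>j::nat. Q t (1/Suc (Suc j)))"
  have sm: "\<bar>Q t h - s j\<bar> \<le> 1/Suc n" if "0 < \<bar>h\<bar>" "\<bar>h\<bar> < 1/Suc m" "j \<ge> m"
     and hm: "\<forall>h k. 0 < \<bar>h\<bar> \<and> \<bar>h\<bar> < 1/Suc m \<and> 0 < \<bar>k\<bar> \<and> \<bar>k\<bar> < 1/Suc m \<longrightarrow> \<bar>Q t h - Q t k\<bar> \<le> 1/Suc n"
     for h j m n
  proof -
    have "1/real (Suc (Suc j)) < 1/Suc m" using that(3) by (simp add: frac_less2)
    then show ?thesis using hm that(1,2) unfolding s_def by auto
  qed
  have "Cauchy s"
  proof (rule metric_CauchyI)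
    fix e :: real assume "e > 0"
    then obtain n :: nat where n: "1/Suc n < e" by (metis nat_approx_posE)
    obtain m where hm: "\<forall>h k. 0 < \<bar>h\<bar> \<and> \<bar>h\<bar> < 1/Suc m \<and> 0 < \<bar>k\<bar> \<and> \<bar>k\<bar> < 1/Suc m \<longrightarrow> \<bar>Q t h - Q t k\<bar> \<le> 1/Suc n"
      using H by blast
    show "\<exists>M. \<forall>i\<ge>M. \<forall>j\<ge>M. dist (s i) (s j) < e"
    proof (intro exI allI impI)
      fix i j assume ij: "m \<le> i" "m \<le> j"
      have "1/real (Suc (Suc i)) < 1/Suc m" using ij by (simp add: frac_less2)
      then have "\<bar>s i - s j\<bar> \<le> 1/Suc n"
        using sm[of "1/Suc (Suc i)" m j n] hm ij unfolding s_def by auto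
      then show "dist (s i) (s j) < e" using n by (simp add: dist_real_def)
    qed
  qed
  then obtain D where sD: "s \<longlonglongrightarrow> D" using Cauchy_convergent_iff convergent_def by blast
  have "(Q t \<longlongrightarrow> D) (at 0)"
  proof (rule tendstoI)
    fix e :: real assume "e > 0"
    then obtain n :: nat where n: "1/Suc n < e" by (metis nat_approx_posE)
    obtain m where hm: "\<forall>h k. 0 < \<bar>h\<bar> \<and> \<bar>h\<bar> < 1/Suc m \<and> 0 < \<bar>k\<bar> \<and> \<bar>k\<bar> < 1/Suc m \<longrightarrow> \<bar>Q t h - Q t k\<bar> \<le> 1/Suc n"
      using H by blast
    show "\<forall>\<^sub>F h in at 0. dist (Q t h) D < e"
      unfolding eventually_at
    proof (intro exI conjI ballI impI)
      show "(0::real) < 1/Suc m" by simp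
      fix h :: real assume "h \<in> UNIV" and h: "h \<noteq> 0 \<and> dist h 0 < 1/Suc m"
      have "(\<lambda>j. \<bar>Q t h - s j\<bar>) \<longlonglongrightarrow> \<bar>Q t h - D\<bar>"
        by (intro tendsto_intros sD)
      moreover have "\<exists>N. \<forall>j\<ge>N. \<bar>Q t h - s j\<bar> \<le> 1/Suc n"
        using sm[of h m _ n] hm h by auto
      ultimately have "\<bar>Q t h - D\<bar> \<le> 1/Suc n" by (rule LIMSEQ_le_const2)
      then show "dist (Q t h) D < e" using n by (simp add: dist_real_def)
    qed
  qed
  then show "\<exists>D. DERIV g t :> D" unfolding DERIV_def Q_def by blast
qed

lemma borel_measurable_deriv:
  fixes g :: "real \<Rightarrow> real"
  assumes cg: "continuous_on UNIV g"
  shows "deriv g \<in> borel_measurable borel"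
proof -
  define Q where "Q \<equiv> \<lambda>t h. (g (t+h) - g t)/h"
  define C where "C \<equiv> \<lambda>n m::nat. {t. \<forall>h k. 0 < \<bar>h\<bar> \<and> \<bar>h\<bar> < 1/Suc m \<and> 0 < \<bar>k\<bar> \<and> \<bar>k\<bar> < 1/Suc m \<longrightarrow>
     \<bar>(g (t+h) - g t)/h - (g (t+k) - g t)/k\<bar> \<le> 1/Suc n}"
  define T where "T = {t. \<exists>D. DERIV g t :> D}"
  have TC: "T = (\<Inter>n. \<Union>m. C n m)"
    unfolding T_def C_def using diff_iff_cauchy[of g] by auto
  have Cb: "C n m \<in> sets borel" for n m
    unfolding C_def by (rule borel_closed[OF cauchy_set_closed[OF cg]])
  have Tb: "T \<in> sets borel" unfolding TC using Cb by auto
  define u where "u \<equiv> \<lambda>i::nat. \<lambda>t. if t \<in> T then Q t (1/Suc i) else (SOME D::real. False)"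
  have cq: "continuous_on UNIV (\<lambda>t. Q t c)" if "c \<noteq> 0" for c
  proof -
    have "continuous_on UNIV (\<lambda>t. g (t + c))"
      by (rule continuous_on_compose2[OF cg]) (auto intro!: continuous_intros)
    then show ?thesis unfolding Q_def using that by (auto intro!: continuous_intros cg)
  qed
  have um: "u i \<in> borel_measurable borel" for i
    unfolding u_def
    by (rule measurable_If_set[OF borel_measurable_continuous_onI[OF cq]]) (use Tb in auto)
  have seq: "filterlim (\<lambda>i::nat. 1 / real (Suc i)) (at 0) sequentially"
    by (rule filterlim_atI) (use LIMSEQ_inverse_real_of_nat in \<open>auto simp: divide_inverse\<close>)
  have conv: "(\<lambda>i. u i t) \<longlonglongrightarrow> deriv g t" for t
  proof (cases "t \<in> T")
    case True
    then have "DERIV g t :> deriv g t" unfolding T_def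
      using DERIV_deriv_iff_has_field_derivative by blast
    then have "(Q t \<longlongrightarrow> deriv g t) (at 0)" unfolding DERIV_def Q_def .
    from filterlim_compose[OF this seq] show ?thesis using True unfolding u_def by simp
  next
    case False
    then have "deriv g t = (SOME D::real. False)" unfolding T_def by (intro deriv_nodiff) auto
    then show ?thesis using False unfolding u_def by simp
  qed
  show ?thesis
    by (rule borel_measurable_LIMSEQ_real[OF conv um])
qed

lemma deriv_bound_lipschitz:
  fixes y :: "real \<Rightarrow> real"
  assumes lip: "L-lipschitz_on {a..b} y" and t: "t \<in> {a<..<b}"
  shows "\<bar>deriv y t\<bar> \<le> max L \<bar>SOME D::real. False\<bar>"
proof (cases "\<exists>D. DERIV y t :> D")
  case True
  then obtain D where D: "DERIV y t :> D" by blast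
  then have lim: "((\<lambda>h. (y (t+h) - y t)/h) \<longlongrightarrow> D) (at 0)" unfolding DERIV_def .
  have "((\<lambda>h. \<bar>(y (t+h) - y t)/h\<bar>) \<longlongrightarrow> \<bar>D\<bar>) (at 0)" by (intro tendsto_intros lim)
  moreover have "\<forall>\<^sub>F h in at 0. \<bar>(y (t+h) - y t)/h\<bar> \<le> L"
    unfolding eventually_at
  proof (intro exI conjI ballI impI)
    show "0 < min (t - a) (b - t)" using t by auto
    fix h :: real assume "h \<in> UNIV" and h: "h \<noteq> 0 \<and> dist h 0 < min (t - a) (b - t)"
    have "t + h \<in> {a..b}" "t \<in> {a..b}" using h t by (auto simp: dist_real_def)
    then have "dist (y (t+h)) (y t) \<le> L * dist (t+h) t"
      using lip unfolding lipschitz_on_def by blast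
    then have "\<bar>y (t+h) - y t\<bar> \<le> L * \<bar>h\<bar>" by (simp add: dist_real_def)
    then show "\<bar>(y (t+h) - y t)/h\<bar> \<le> L" using h by (simp add: abs_divide divide_le_eq)
  qed
  ultimately have "\<bar>D\<bar> \<le> L" by (rule tendsto_upperbound) simp
  then show ?thesis using DERIV_imp_deriv[OF D] by simp
next
  case False
  then show ?thesis using deriv_nodiff[OF False] by simp
qed

lemma sing_has_integral_sym:
  fixes \<beta> x R :: real
  assumes b: "0 \<le> \<beta>" "\<beta> < 1" and R: "R \<ge> 0"
  shows "((\<lambda>t. \<bar>t - x\<bar> powr (-\<beta>)) has_integral 2 * (R powr (1-\<beta>) / (1-\<beta>))) {x-R..x+R}"
proof -
  have "((\<lambda>s. s powr (-\<beta>)) has_integral (R powr (-\<beta>+1) / (-\<beta>+1))) {0..R}"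
    by (rule has_integral_powr_from_0) (use b R in auto)
  then have P0: "((\<lambda>s. s powr (-\<beta>)) has_integral (R powr (1-\<beta>) / (1-\<beta>))) {0..R}"
    by (simp add: add.commute)
  have P1: "((\<lambda>s. \<bar>s\<bar> powr (-\<beta>)) has_integral (R powr (1-\<beta>) / (1-\<beta>))) {0..R}"
    by (rule has_integral_eq[OF _ P0]) auto
  have P2: "((\<lambda>s. \<bar>s\<bar> powr (-\<beta>)) has_integral (R powr (1-\<beta>) / (1-\<beta>))) {-R..0}"
    using has_integral_reflect_real[where f="\<lambda>s. \<bar>s\<bar> powr (-\<beta>)" and a=0 and b=R] P1 by simp
  have P3: "((\<lambda>s. \<bar>s\<bar> powr (-\<beta>)) has_integral 2 * (R powr (1-\<beta>) / (1-\<beta>))) {-R..R}"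
    using has_integral_combine[OF _ _ P2 P1] R by simp
  have "(((\<lambda>t. \<bar>t - x\<bar> powr (-\<beta>)) \<circ> ((+) x)) has_integral 2 * (R powr (1-\<beta>) / (1-\<beta>))) (cbox (-R) R)"
    using P3 by (simp add: o_def)
  then have "((\<lambda>t. \<bar>t - x\<bar> powr (-\<beta>)) has_integral 2 * (R powr (1-\<beta>) / (1-\<beta>))) (cbox (-R + x) (R + x))"
    by (rule has_integral_shift_cbox_iff[THEN iffD1])
  then show ?thesis by (simp add: algebra_simps)
qed

definition K0 :: "real \<Rightarrow> real \<Rightarrow> real \<Rightarrow> real" where
  "K0 a b \<beta> = 2 * ((2*(b-a)) powr (1-\<beta>) / (1-\<beta>)) + (b-a) powr (1-\<beta>)"

lemma sing_integral_bound:
  fixes \<beta> x a b :: real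
  assumes b: "0 \<le> \<beta>" "\<beta> < 1" and ab: "a < b"
  shows "(\<lambda>t. \<bar>t - x\<bar> powr (-\<beta>)) integrable_on {a..b} \<and>
         integral {a..b} (\<lambda>t. \<bar>t - x\<bar> powr (-\<beta>)) \<le> K0 a b \<beta>"
proof -
  let ?g = "\<lambda>t. \<bar>t - x\<bar> powr (-\<beta>)"
  let ?l = "b - a"
  have A: "0 \<le> 2 * ((2*?l) powr (1-\<beta>) / (1-\<beta>))" using b by simp
  have B: "0 \<le> ?l powr (1-\<beta>)" by simp
  show ?thesis
  proof (cases "a - ?l \<le> x \<and> x \<le> b + ?l")
    case True
    have I: "(?g has_integral 2 * ((2*?l) powr (1-\<beta>) / (1-\<beta>))) {x-2*?l..x+2*?l}"
      by (rule sing_has_integral_sym) (use b ab in auto)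
    have sub: "{a..b} \<subseteq> {x-2*?l..x+2*?l}" using True by auto
    have int: "?g integrable_on {a..b}"
      using integrable_on_subcbox[OF has_integral_integrable[OF I], of a b] sub by simp
    have "integral {a..b} ?g \<le> integral {x-2*?l..x+2*?l} ?g"
      by (rule integral_subset_le[OF sub int has_integral_integrable[OF I]]) auto
    also have "\<dots> = 2 * ((2*?l) powr (1-\<beta>) / (1-\<beta>))" using I by (rule integral_unique)
    finally show ?thesis using int B unfolding K0_def by linarith
  next
    case False
    then have far: "\<bar>t - x\<bar> \<ge> ?l" if "t \<in> {a..b}" for t using that by auto
    have cont: "continuous_on {a..b} ?g"
    proof (rule continuous_on_powr')
      show "continuous_on {a..b} (\<lambda>t. \<bar>t - x\<bar>)" by (intro continuous_intros)
      show "continuous_on {a..b} (\<lambda>t. -\<beta>)" by (intro continuous_intros)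
      show "\<forall>t\<in>{a..b}. 0 \<le> \<bar>t - x\<bar> \<and> (\<bar>t - x\<bar> = 0 \<longrightarrow> 0 < - \<beta>)"
      proof (intro ballI conjI impI)
        fix t assume t: "t \<in> {a..b}" and "\<bar>t - x\<bar> = 0"
        then show "0 < - \<beta>" using far[OF t] ab by linarith
      qed simp
    qed
    have int: "?g integrable_on {a..b}" by (rule integrable_continuous_interval[OF cont])
    have le: "?g t \<le> ?l powr (-\<beta>)" if "t \<in> {a..b}" for t
      using far[OF that] ab b by (intro powr_mono2') auto
    have "integral {a..b} ?g \<le> integral {a..b} (\<lambda>t. ?l powr (-\<beta>))"
      by (rule integral_le[OF int]) (use le in auto)
    also have "\<dots> = ?l * ?l powr (-\<beta>)" using ab by simp
    also have "\<dots> = ?l powr (1-\<beta>)" using ab by (simp add: powr_diff powr_minus divide_inverse)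
    finally show ?thesis using int A unfolding K0_def by linarith
  qed
qed

lemma prod_powr_bound:
  fixes m :: nat and bs c d :: "nat \<Rightarrow> real" and \<beta> :: real
  assumes bs: "\<forall>i\<in>{1..m}. bs i > 0" and sb: "(\<Sum>i=1..m. bs i) = \<beta>" and m: "m \<ge> 1"
    and cd: "\<And>i. i \<in> {1..m} \<Longrightarrow> d i \<le> c i" and d: "\<And>i. i \<in> {1..m} \<Longrightarrow> 0 < d i"
  shows "(\<Prod>i=1..m. (1 / c i) powr bs i) \<le> (\<Sum>i=1..m. (bs i / \<beta>) * d i powr (-\<beta>))"
proof -
  have bpos: "\<beta> > 0" unfolding sb[symmetric] using bs m by (intro sum_pos) auto
  have "(\<Prod>i=1..m. (1 / c i) powr bs i) \<le> (\<Prod>i=1..m. exp (-bs i * ln (d i)))"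
  proof (rule prod_mono)
    fix i assume i: "i \<in> {1..m}"
    have "(1 / c i) powr bs i \<le> (1 / d i) powr bs i"
      using cd[OF i] d[OF i] bs[rule_format, OF i] by (intro powr_mono2) (auto simp: divide_simps)
    also have "\<dots> = exp (-bs i * ln (d i))" using d[OF i] by (simp add: powr_def ln_div)
    finally show "0 \<le> (1 / c i) powr bs i \<and> (1 / c i) powr bs i \<le> exp (-bs i * ln (d i))" by simp
  qed
  also have "\<dots> = exp (\<Sum>i=1..m. -bs i * ln (d i))" by (simp add: exp_sum)
  also have "(\<Sum>i=1..m. -bs i * ln (d i)) = (\<Sum>i=1..m. (bs i / \<beta>) *\<^sub>R (-\<beta> * ln (d i)))"
    using bpos by (intro sum.cong) auto
  also have "exp \<dots> \<le> (\<Sum>i=1..m. (bs i / \<beta>) * exp (-\<beta> * ln (d i)))"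
  proof (rule convex_on_sum[OF _ _ exp_convex])
    show "finite {1..m}" by simp
    show "{1..m} \<noteq> {}" using m by simp
    show "(\<Sum>i=1..m. bs i / \<beta>) = 1" using bpos sb by (simp add: sum_divide_distrib[symmetric])
    show "\<And>i. i \<in> {1..m} \<Longrightarrow> 0 \<le> bs i / \<beta>" using bs bpos by (meson less_imp_le divide_nonneg_pos)
  qed auto
  also have "\<dots> = (\<Sum>i=1..m. (bs i / \<beta>) * d i powr (-\<beta>))"
  proof (intro sum.cong refl)
    fix i assume i: "i \<in> {1..m}"
    show "bs i / \<beta> * exp (- \<beta> * ln (d i)) = bs i / \<beta> * d i powr - \<beta>"
      using d[OF i] by (simp add: powr_def)
  qed
  finally show ?thesis .
qed

lemma B_integral:
  fixes m :: nat and bs x :: "nat \<Rightarrow> real" and \<beta> a b :: real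
  assumes bs: "\<forall>i\<in>{1..m}. bs i > 0" and sb: "(\<Sum>i=1..m. bs i) = \<beta>" and m: "m \<ge> 1"
    and b1: "\<beta> < 1" and ab: "a < b"
  shows "(\<lambda>t. \<Sum>i=1..m. (bs i / \<beta>) * \<bar>t - x i\<bar> powr (-\<beta>)) integrable_on {a..b} \<and>
         integral {a..b} (\<lambda>t. \<Sum>i=1..m. (bs i / \<beta>) * \<bar>t - x i\<bar> powr (-\<beta>)) \<le> K0 a b \<beta>"
proof -
  have bpos: "\<beta> > 0" unfolding sb[symmetric] using bs m by (intro sum_pos) auto
  have S: "(\<lambda>t. \<bar>t - x i\<bar> powr (-\<beta>)) integrable_on {a..b} \<and>
         integral {a..b} (\<lambda>t. \<bar>t - x i\<bar> powr (-\<beta>)) \<le> K0 a b \<beta>" for i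
    by (rule sing_integral_bound) (use bpos b1 ab in auto)
  have I: "(\<lambda>t. (bs i / \<beta>) * \<bar>t - x i\<bar> powr (-\<beta>)) integrable_on {a..b}" for i
    using S[of i] by (intro integrable_on_mult_right) auto
  have int: "(\<lambda>t. \<Sum>i=1..m. (bs i / \<beta>) * \<bar>t - x i\<bar> powr (-\<beta>)) integrable_on {a..b}"
    by (rule integrable_sum) (use I in auto)
  have "integral {a..b} (\<lambda>t. \<Sum>i=1..m. (bs i / \<beta>) * \<bar>t - x i\<bar> powr (-\<beta>))
      = (\<Sum>i=1..m. integral {a..b} (\<lambda>t. (bs i / \<beta>) * \<bar>t - x i\<bar> powr (-\<beta>)))"
    by (rule integral_sum) (use I in auto)
  also have "\<dots> = (\<Sum>i=1..m. (bs i / \<beta>) * integral {a..b} (\<lambda>t. \<bar>t - x i\<bar> powr (-\<beta>)))"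
    by (intro sum.cong refl) simp
  also have "\<dots> \<le> (\<Sum>i=1..m. (bs i / \<beta>) * K0 a b \<beta>)"
  proof (intro sum_mono mult_left_mono)
    fix i assume i: "i \<in> {1..m}"
    show "integral {a..b} (\<lambda>t. \<bar>t - x i\<bar> powr - \<beta>) \<le> K0 a b \<beta>" using S[of i] by auto
    show "0 \<le> bs i / \<beta>" using bs i bpos by (meson less_imp_le divide_nonneg_pos)
  qed
  also have "\<dots> = K0 a b \<beta>"
    using bpos sb by (simp add: sum_distrib_right[symmetric] sum_divide_distrib[symmetric])
  finally show ?thesis using int by simp
qed

lemma integrable_bound_ae:
  fixes f g :: "real \<Rightarrow> real"
  assumes fm: "f measurable_on {a..b}" and gi: "g integrable_on {a..b}" and N: "negligible N"
    and le: "\<And>t. t \<in> {a..b} - N \<Longrightarrow> \<bar>f t\<bar> \<le> g t"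
  shows "f integrable_on {a..b} \<and> integral {a..b} f \<le> integral {a..b} g"
proof -
  define G where "G = (\<lambda>t. if t \<in> N then \<bar>f t\<bar> else g t)"
  have Gi: "G integrable_on {a..b}" by (rule integrable_spike[OF gi N]) (auto simp: G_def)
  have GI: "integral {a..b} G = integral {a..b} g" by (rule integral_spike[OF N]) (auto simp: G_def)
  have lb: "{a..b} \<in> sets lebesgue" by simp
  have fb: "f \<in> borel_measurable (lebesgue_on {a..b})"
    using fm measurable_on_iff_borel_measurable[OF lb] by blast
  have nf: "norm (f t) \<le> G t" if "t \<in> {a..b}" for t
    using le[of t] that by (auto simp: G_def)
  have fi: "f integrable_on {a..b}"
    by (rule measurable_bounded_by_integrable_imp_integrable[OF fb Gi nf lb])
  have "integral {a..b} f \<le> integral {a..b} G"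
    by (rule integral_le[OF fi Gi]) (use nf in force)
  then show ?thesis using fi GI by simp
qed

theorem lemma2p8:
  fixes L a b \<beta> :: real
  assumes "a < b"
  shows "\<exists>C::real. \<forall>(y::real \<Rightarrow> real) (m::nat) (z::nat \<Rightarrow> complex) (bs::nat \<Rightarrow> real).
           L-lipschitz_on {a..b} y \<longrightarrow>
           (\<forall>i\<in>{1..m}. bs i > 0) \<longrightarrow>
           (\<Sum>i=1..m. bs i) = \<beta> \<longrightarrow> \<beta> < 1 \<longrightarrow>
           (let \<gamma> = (\<lambda>t. Complex t (y t));
                f = (\<lambda>t. (\<Prod>i=1..m. (1 / cmod (\<gamma> t - z i)) powr (bs i)) * sqrt (1 + (deriv y t)\<^sup>2))
            in f integrable_on {a..b} \<and> integral {a..b} f < C)"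
proof -
  note ab = assms
  define c0 where "c0 = (SOME D::real. False)"
  define M where "M = max L \<bar>c0\<bar>"
  define C where "C = sqrt (1 + M\<^sup>2) * (K0 a b \<beta> + (b - a)) + 1"
  show ?thesis
  proof (rule exI[of _ C], intro allI impI)
    fix y :: "real \<Rightarrow> real" and m :: nat and z :: "nat \<Rightarrow> complex" and bs :: "nat \<Rightarrow> real"
    assume lip: "L-lipschitz_on {a..b} y" and bs: "\<forall>i\<in>{1..m}. bs i > 0"
      and sb: "(\<Sum>i=1..m. bs i) = \<beta>" and b1: "\<beta> < 1"
    define P where "P = (\<lambda>t. (\<Prod>i=1..m. (1 / cmod (Complex t (y t) - z i)) powr (bs i)))"
    define f where "f = (\<lambda>t. P t * sqrt (1 + (deriv y t)\<^sup>2))"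
    define yt where "yt = (\<lambda>t. y (max a (min b t)))"
    have cy: "continuous_on {a..b} y" using lipschitz_on_continuous_on[OF lip] .
    have cyt: "continuous_on UNIV yt" unfolding yt_def
      by (rule continuous_on_compose2[OF cy]) (use ab in \<open>auto intro!: continuous_intros\<close>)
    have dm[measurable]: "deriv yt \<in> borel_measurable borel" by (rule borel_measurable_deriv[OF cyt])
    have cc: "continuous_on UNIV (\<lambda>t. cmod (Complex t (yt t) - z i))" for i
    proof -
      have e: "(\<lambda>t. Complex t (yt t)) = (\<lambda>t. complex_of_real t + \<i> * complex_of_real (yt t))"
        by (auto simp: Complex_eq)
      have "continuous_on UNIV (\<lambda>t. complex_of_real t + \<i> * complex_of_real (yt t))"
        by (intro continuous_intros cyt)
      then have "continuous_on UNIV (\<lambda>t. Complex t (yt t))" unfolding e .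
      then show ?thesis by (intro continuous_intros cyt)
    qed
    have cm[measurable]: "(\<lambda>t. cmod (Complex t (yt t) - z i)) \<in> borel_measurable borel" for i
      by (rule borel_measurable_continuous_onI[OF cc])
    define Ft where "Ft = (\<lambda>t. (\<Prod>i=1..m. (1 / cmod (Complex t (yt t) - z i)) powr (bs i)) * sqrt (1 + (deriv yt t)\<^sup>2))"
    have Fb: "Ft \<in> borel_measurable borel" unfolding Ft_def by measurable
    have lb: "{a..b} \<in> sets lebesgue" by simp
    have "Ft \<circ> id \<in> borel_measurable (lebesgue_on {a..b})"
      by (rule measurable_comp[OF _ Fb]) simp
    then have "Ft \<in> borel_measurable (lebesgue_on {a..b})" by (simp add: o_def)
    then have Fm: "Ft measurable_on {a..b}"
      by (rule iffD2[OF measurable_on_iff_borel_measurable[OF lb]])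
    have yeq: "y t = yt t" if "t \<in> {a..b}" for t using that by (auto simp: yt_def)
    have deq: "deriv y t = deriv yt t" if t: "t \<in> {a<..<b}" for t
    proof (rule deriv_cong_ev)
      have "\<forall>\<^sub>F x in nhds t. x \<in> {a<..<b}" by (rule eventually_nhds_in_open) (use t in auto)
      then show "\<forall>\<^sub>F x in nhds t. y x = yt x" by eventually_elim (auto simp: yeq)
    qed simp
    have eqF: "f t = Ft t" if "t \<in> {a<..<b}" for t
      using that yeq[of t] deq[of t] by (simp add: f_def P_def Ft_def)
    have fm: "f measurable_on {a..b}"
      by (rule measurable_on_spike[OF Fm, of "{a,b}"]) (auto simp: eqF)
    have sqb: "sqrt (1 + (deriv y t)\<^sup>2) \<le> sqrt (1 + M\<^sup>2)" if "t \<in> {a<..<b}" for t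
    proof -
      have "\<bar>deriv y t\<bar> \<le> M" using deriv_bound_lipschitz[OF lip that] by (simp add: M_def c0_def)
      then have "(deriv y t)\<^sup>2 \<le> M\<^sup>2" by (metis abs_le_square_iff abs_of_nonneg abs_ge_zero order_trans)
      then show ?thesis by simp
    qed
    have Pnn: "P t \<ge> 0" for t unfolding P_def by (intro prod_nonneg) auto
    have fnn: "f t \<ge> 0" for t unfolding f_def using Pnn by simp
    have K0nn: "K0 a b \<beta> \<ge> 0" unfolding K0_def using b1 by simp
    have SK: "0 \<le> sqrt (1 + M\<^sup>2) * K0 a b \<beta>" using K0nn by simp
    have Sp: "0 < sqrt (1 + M\<^sup>2) * (b - a)" using ab by (simp add: add_pos_nonneg)
    have "f integrable_on {a..b} \<and> integral {a..b} f < C"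
    proof (cases "m = 0")
      case True
      have "f integrable_on {a..b} \<and> integral {a..b} f \<le> integral {a..b} (\<lambda>t. sqrt (1 + M\<^sup>2))"
      proof (rule integrable_bound_ae[OF fm _ _])
        show "negligible {a,b}" by simp
        show "(\<lambda>t. sqrt (1 + M\<^sup>2)) integrable_on {a..b}" by (rule integrable_continuous_interval) (rule continuous_on_const)
        fix t assume "t \<in> {a..b} - {a,b}"
        then have t: "t \<in> {a<..<b}" by auto
        show "\<bar>f t\<bar> \<le> sqrt (1 + M\<^sup>2)" using sqb[OF t] True fnn[of t] by (simp add: f_def P_def)
      qed
      moreover have "integral {a..b} (\<lambda>t. sqrt (1 + M\<^sup>2)) = sqrt (1 + M\<^sup>2) * (b - a)" using ab by simp
      moreover have "sqrt (1 + M\<^sup>2) * (b - a) < C" unfolding C_def using SK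
        by (simp add: distrib_left)
      ultimately show ?thesis by linarith
    next
      case False
      then have m1: "m \<ge> 1" by simp
      define B where "B = (\<lambda>t. \<Sum>i=1..m. (bs i / \<beta>) * \<bar>t - Re (z i)\<bar> powr (-\<beta>))"
      have BI: "B integrable_on {a..b} \<and> integral {a..b} B \<le> K0 a b \<beta>"
        unfolding B_def by (rule B_integral[OF bs sb m1 b1 ab])
      define N where "N = {a,b} \<union> (\<lambda>i. Re (z i)) ` {1..m}"
      have Nn: "negligible N" unfolding N_def by (intro negligible_finite) auto
      have "f integrable_on {a..b} \<and> integral {a..b} f \<le> integral {a..b} (\<lambda>t. sqrt (1 + M\<^sup>2) * B t)"
      proof (rule integrable_bound_ae[OF fm _ Nn])
        show "(\<lambda>t. sqrt (1 + M\<^sup>2) * B t) integrable_on {a..b}"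
          using BI by (intro integrable_on_mult_right) auto
        fix t assume tN: "t \<in> {a..b} - N"
        then have t: "t \<in> {a<..<b}" by (auto simp: N_def)
        have PB: "P t \<le> B t" unfolding P_def B_def
        proof (rule prod_powr_bound[OF bs sb m1])
          fix i assume i: "i \<in> {1..m}"
          have "\<bar>Re (Complex t (y t) - z i)\<bar> \<le> cmod (Complex t (y t) - z i)" by (rule abs_Re_le_cmod)
          then show "\<bar>t - Re (z i)\<bar> \<le> cmod (Complex t (y t) - z i)" by simp
          have "t \<noteq> Re (z i)" using tN i by (auto simp: N_def)
          then show "0 < \<bar>t - Re (z i)\<bar>" by simp
        qed
        have "f t \<le> B t * sqrt (1 + M\<^sup>2)" unfolding f_def
          by (rule mult_mono[OF PB sqb[OF t]]) (use Pnn[of t] PB in auto)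
        then show "\<bar>f t\<bar> \<le> sqrt (1 + M\<^sup>2) * B t" using fnn[of t] by (simp add: mult.commute)
      qed
      moreover have "integral {a..b} (\<lambda>t. sqrt (1 + M\<^sup>2) * B t) = sqrt (1 + M\<^sup>2) * integral {a..b} B"
        by simp
      moreover have "sqrt (1 + M\<^sup>2) * integral {a..b} B \<le> sqrt (1 + M\<^sup>2) * K0 a b \<beta>"
        using BI by (intro mult_left_mono) auto
      moreover have "sqrt (1 + M\<^sup>2) * K0 a b \<beta> < C" unfolding C_def using Sp
        by (simp add: distrib_left)
      ultimately show ?thesis by linarith
    qed
    then show "let \<gamma> = (\<lambda>t. Complex t (y t));
                f = (\<lambda>t. (\<Prod>i=1..m. (1 / cmod (\<gamma> t - z i)) powr (bs i)) * sqrt (1 + (deriv y t)\<^sup>2))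
            in f integrable_on {a..b} \<and> integral {a..b} f < C"
      unfolding Let_def f_def P_def by simp
  qed
qed

end
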